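(* Let $S$ be a left cancellative semigroup and let $U$ be the set of regular elements of $S$. Then: (i) for all $x,y\in S$, if $xy\in U$ then $x\in U$ and $y\in U$; in particular $S\setminus U$ is either empty or an ideal of $S$; (ii) if $U$ is non-empty, then $U$ is a subsemigroup of $S$ which is a right group; (iii) if $x\in S$ and the $\mathcal{R}$-class $R_x$ of $x$ in $S$ has more than one element, then $R_x=xU$; (iv) if $U$ is non-empty, then for every $x\in S$ the set $xU$ is an $\mathcal{R}$-class of $S$ (not necessarily containing $x$).
   Context: $S$ is left cancellative if $ax=ay$ implies $x=y$ for all $a,x,y\in S$. An element $x$ is regular if $x=xzx$ for some $z\in S$. $\mathcal{R}$ is Green's relation: $x\,\mathcal{R}\,y$ iff $xS^1=yS^1$. A right zero semigroup is a semigroup $E$ with $ef=f$ for all $e,f\in E$; a right group is a semigroup isomorphic to a direct product $G\times E$ of a group $G$ and a right zero semigroup $E$. *)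

theory Defs
  imports "HOL-Algebra.Group"
begin

text \<open>The semigroup S is the whole type 'a of class semigroup_mult.\<close>

definition left_cancellative :: "('a::semigroup_mult) itself \<Rightarrow> bool" where
  "left_cancellative _ \<longleftrightarrow> (\<forall>a x y::'a. a * x = a * y \<longrightarrow> x = y)"

definition regular_el :: "'a::semigroup_mult \<Rightarrow> bool" where
  "regular_el x \<longleftrightarrow> (\<exists>z. x = x * z * x)"

definition is_ideal :: "('a::semigroup_mult) set \<Rightarrow> bool" where
  "is_ideal I \<longleftrightarrow> I \<noteq> {} \<and> (\<forall>x\<in>I. \<forall>s. x * s \<in> I \<and> s * x \<in> I)"

definition subsemigroup :: "('a::semigroup_mult) set \<Rightarrow> bool" where
  "subsemigroup T \<longleftrightarrow> (\<forall>x\<in>T. \<forall>y\<in>T. x * y \<in> T)"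

definition right_ideal1 :: "'a::semigroup_mult \<Rightarrow> 'a set" where
  "right_ideal1 x = insert x (range (\<lambda>s. x * s))"

definition R_class :: "'a::semigroup_mult \<Rightarrow> 'a set" where
  "R_class x = {y. right_ideal1 y = right_ideal1 x}"

definition right_zero_semigroup :: "'b set \<Rightarrow> ('b \<Rightarrow> 'b \<Rightarrow> 'b) \<Rightarrow> bool" where
  "right_zero_semigroup E m \<longleftrightarrow> (\<forall>e\<in>E. \<forall>f\<in>E. m e f = f)"

text \<open>The group and the
  right zero semigroup are taken with carriers in the type 'a (no loss: both embed in T).\<close>
definition right_group :: "('a::semigroup_mult) set \<Rightarrow> bool" where
  "right_group T \<longleftrightarrow> subsemigroup T \<and>
     (\<exists>(G :: 'a monoid) (E :: 'a set) (\<phi> :: 'a \<Rightarrow> 'a \<times> 'a).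
        group G \<and> right_zero_semigroup E (\<lambda>e f. f) \<and>
        bij_betw \<phi> T (carrier G \<times> E) \<and>
        (\<forall>x\<in>T. \<forall>y\<in>T. \<phi> (x * y) = (fst (\<phi> x) \<otimes>\<^bsub>G\<^esub> fst (\<phi> y), snd (\<phi> y))))"

end

theory Submission
  imports Defs
begin

lemma lcD: "left_cancellative TYPE('a::semigroup_mult) \<Longrightarrow> (a::'a) * x = a * y \<Longrightarrow> x = y"
  unfolding left_cancellative_def by blast

lemma idem_left:
  assumes lc: "left_cancellative TYPE('a::semigroup_mult)" and f: "(f::'a) * f = f"
  shows "f * s = s"
proof -
  have "f * (f * s) = f * s" by (simp add: mult.assoc[symmetric] f)
  then show ?thesis using lcD[OF lc] by blast
qed

lemma reg_idem: "(e::'a::semigroup_mult) * e = e \<Longrightarrow> regular_el e"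
  unfolding regular_el_def by (rule exI[of _ e]) simp

lemma reg_E:
  assumes lc: "left_cancellative TYPE('a::semigroup_mult)" and r: "regular_el (x::'a)"
  obtains z where "x * (z * x) = x" "(z*x) * (z*x) = z * x" "\<And>s. z * (x * s) = s"
proof -
  obtain z where hz0: "x = x * z * x" using r unfolding regular_el_def by blast
  have hz: "x * (z * x) = x" using hz0[symmetric] by (simp add: mult.assoc)
  have i: "(z*x) * (z*x) = z * x" by (simp add: mult.assoc hz)
  have "\<And>s. z * (x * s) = s" using idem_left[OF lc i] by (simp add: mult.assoc)
  then show ?thesis using that hz i by blast
qed

lemma reg_factor:
  assumes lc: "left_cancellative TYPE('a::semigroup_mult)" and r: "regular_el ((x::'a) * y)"
  shows "regular_el x \<and> regular_el y"
proof -
  obtain z where hz0: "x * y = x * y * z * (x * y)" using r unfolding regular_el_def by blast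
  have hz: "x * (y * (z * (x * y))) = x * y" using hz0[symmetric] by (simp add: mult.assoc)
  have "x * (y * (z * x) * y) = x * y" using hz by (simp add: mult.assoc)
  then have "y * (z * x) * y = y" using lcD[OF lc] by blast
  then have ry: "regular_el y" unfolding regular_el_def by (intro exI[of _ "z*x"]) simp
  have g: "(x*y*z) * (x*y*z) = x*y*z"
  proof -
    have "(x*y*z) * (x*y*z) = (x * (y * (z * (x * y)))) * z" by (simp add: mult.assoc)
    also have "\<dots> = x*y*z" using hz by simp
    finally show ?thesis .
  qed
  have gx: "(x*y*z) * x = x" by (rule idem_left[OF lc g])
  have "x * (y*z) * x = x" using gx by (simp add: mult.assoc)
  then have "regular_el x" unfolding regular_el_def by (intro exI[of _ "y*z"]) simp
  with ry show ?thesis by blast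
qed

lemma reg_mult:
  assumes lc: "left_cancellative TYPE('a::semigroup_mult)" and rx: "regular_el (x::'a)"
    and ry: "regular_el y"
  shows "regular_el (x * y)"
proof -
  obtain z where z1: "x * (z * x) = x" and z3: "\<And>s. z * (x * s) = s" using reg_E[OF lc rx] by blast
  obtain w where w1: "y * (w * y) = y" using reg_E[OF lc ry] by blast
  have "x * y * (w * z) * (x * y) = x * (y * (w * (z * (x * y))))" by (simp add: mult.assoc)
  also have "\<dots> = x * y" using z3 w1 by simp
  finally show ?thesis unfolding regular_el_def by (intro exI[of _ "w*z"]) simp
qed

lemma the_unit:
  assumes lc: "left_cancellative TYPE('a::semigroup_mult)" and "(a::'a) * u = a"
  shows "(THE v. a * v = a) = u"
  using assms lcD[OF lc, of a] by (intro the_equality) auto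

lemma R_eq:
  assumes lc: "left_cancellative TYPE('a::semigroup_mult)"
    and U_def: "U = {x::'a. regular_el x}"
    and ye: "y * e = y" and eU: "e \<in> U"
  shows "R_class y = (\<lambda>u. y * u) ` U"
proof
  show "R_class y \<subseteq> (\<lambda>u. y * u) ` U"
  proof
    fix w assume "w \<in> R_class y"
    then have eq: "right_ideal1 w = right_ideal1 y" unfolding R_class_def by simp
    have wy: "w \<in> right_ideal1 y" using eq unfolding right_ideal1_def by auto
    have yw: "y \<in> right_ideal1 w" using eq unfolding right_ideal1_def by auto
    show "w \<in> (\<lambda>u. y * u) ` U"
    proof (cases "w = y")
      case True then show ?thesis using ye eU by (metis image_eqI)
    next
      case False
      then obtain a where a: "w = y * a" using wy unfolding right_ideal1_def by auto
      from False obtain b where b: "y = w * b" using yw unfolding right_ideal1_def by auto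
      have "y * (a * b * a) = (y * a * b) * a" by (simp add: mult.assoc)
      also have "\<dots> = y * a" using a[symmetric] b[symmetric] by simp
      finally have "a * b * a = a" using lcD[OF lc] by blast
      then have "a \<in> U" unfolding U_def regular_el_def by (intro CollectI exI[of _ b]) simp
      then show ?thesis using a by blast
    qed
  qed
next
  show "(\<lambda>u. y * u) ` U \<subseteq> R_class y"
  proof
    fix w assume "w \<in> (\<lambda>u. y * u) ` U"
    then obtain u where u: "u \<in> U" "w = y * u" by blast
    then have "regular_el u" unfolding U_def by simp
    then obtain z where zu: "u * (z * u) = u" using reg_E[OF lc] by blast
    have i: "(u*z)*(u*z) = u*z"
    proof -
      have "(u*z)*(u*z) = (u * (z * u)) * z" by (simp add: mult.assoc)
      then show ?thesis using zu by simp
    qed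
    have "u * (z * e) = e" using idem_left[OF lc i] by (simp add: mult.assoc)
    then have y_w: "y = w * (z * e)" using u ye by (simp add: mult.assoc)
    have "right_ideal1 w = right_ideal1 y"
    proof
      show "right_ideal1 w \<subseteq> right_ideal1 y" unfolding right_ideal1_def using u
        by (auto simp: mult.assoc)
      show "right_ideal1 y \<subseteq> right_ideal1 w" unfolding right_ideal1_def using y_w
        by (auto simp: mult.assoc)
    qed
    then show "w \<in> R_class y" unfolding R_class_def by simp
  qed
qed

theorem mainTheorem7:
  fixes U :: "('a::semigroup_mult) set"
  assumes lc: "left_cancellative TYPE('a)"
    and U_def: "U = {x. regular_el x}"
  shows "(\<forall>x y. x * y \<in> U \<longrightarrow> x \<in> U \<and> y \<in> U)
       \<and> (- U = {} \<or> is_ideal (- U))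
       \<and> (U \<noteq> {} \<longrightarrow> subsemigroup U \<and> right_group U)
       \<and> (\<forall>x. (\<exists>y\<in>R_class x. y \<noteq> x) \<longrightarrow> R_class x = (\<lambda>u. x * u) ` U)
       \<and> (U \<noteq> {} \<longrightarrow> (\<forall>x. \<exists>y. (\<lambda>u. x * u) ` U = R_class y))"
proof -
  have P1: "\<forall>x y. x * y \<in> U \<longrightarrow> x \<in> U \<and> y \<in> U"
    using reg_factor[OF lc] unfolding U_def by blast
  have P2: "- U = {} \<or> is_ideal (- U)"
  proof (cases "- U = {}")
    case False
    have "\<forall>x\<in>- U. \<forall>s. x * s \<in> - U \<and> s * x \<in> - U" using P1 by blast
    then show ?thesis using False unfolding is_ideal_def by blast
  qed simp
  have SS: "subsemigroup U" unfolding subsemigroup_def U_def using reg_mult[OF lc] by blast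
  have P3: "U \<noteq> {} \<longrightarrow> subsemigroup U \<and> right_group U"
  proof
    assume "U \<noteq> {}"
    then obtain u0 :: 'a where "regular_el u0" using U_def by blast
    then obtain z0 where "(z0*u0)*(z0*u0) = z0*u0" using reg_E[OF lc] by blast
    define e0 where "e0 = z0 * u0"
    have e0: "e0 * e0 = e0" using \<open>(z0*u0)*(z0*u0) = z0*u0\<close> e0_def by simp
    have e0l: "\<And>s. e0 * s = s" using idem_left[OF lc e0] .
    have e0U: "e0 \<in> U" using reg_idem[OF e0] U_def by simp
    define G where "G = \<lparr>carrier = {g. g \<in> U \<and> g * e0 = g}, mult = (*), one = e0\<rparr>"
    define E where "E = {e::'a. e * e = e}"
    define \<phi> where "\<phi> = (\<lambda>x. (x * e0, THE u. x * u = x))"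
    have grp: "group G"
    proof (rule groupI)
      fix x y assume "x \<in> carrier G" "y \<in> carrier G"
      then show "x \<otimes>\<^bsub>G\<^esub> y \<in> carrier G" using SS unfolding G_def subsemigroup_def
        by (auto simp: mult.assoc)
    next
      show "\<one>\<^bsub>G\<^esub> \<in> carrier G" using e0U e0 unfolding G_def by simp
    next
      fix x y z show "x \<otimes>\<^bsub>G\<^esub> y \<otimes>\<^bsub>G\<^esub> z = x \<otimes>\<^bsub>G\<^esub> (y \<otimes>\<^bsub>G\<^esub> z)"
        unfolding G_def by (simp add: mult.assoc)
    next
      fix x show "\<one>\<^bsub>G\<^esub> \<otimes>\<^bsub>G\<^esub> x = x" unfolding G_def by (simp add: e0l)
    next
      fix g assume "g \<in> carrier G"
      then have gU: "regular_el g" and ge: "g * e0 = g" unfolding G_def U_def by auto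
      obtain z where z1: "g * (z * g) = g" using reg_E[OF lc gU] by blast
      have "g * (z * g) = g * e0" using z1 ge by simp
      then have zg: "z * g = e0" using lcD[OF lc] by blast
      define h where "h = z * e0"
      have hg: "h * g = e0" unfolding h_def by (simp add: mult.assoc e0l zg)
      have "h * g * h = h" by (simp add: hg e0l)
      then have "h \<in> U" unfolding U_def regular_el_def by (intro CollectI exI[of _ g]) simp
      moreover have "h * e0 = h" unfolding h_def by (simp add: mult.assoc e0)
      ultimately show "\<exists>y\<in>carrier G. y \<otimes>\<^bsub>G\<^esub> g = \<one>\<^bsub>G\<^esub>"
        unfolding G_def using hg by auto
    qed
    have ex: "x * (THE u. x * u = x) = x \<and> (THE u. x * u = x) \<in> E" if xU: "x \<in> U" for x
    proof -
      have "regular_el x" using xU U_def by simp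
      then obtain z where z1: "x * (z * x) = x" and z2: "(z*x)*(z*x) = z*x"
        using reg_E[OF lc] by blast
      have th: "(THE v. x * v = x) = z * x" by (rule the_unit[OF lc z1])
      show ?thesis unfolding th E_def using z1 z2 by simp
    qed
    have bij: "bij_betw \<phi> U (carrier G \<times> E)"
    proof (rule bij_betw_byWitness[where f' = "\<lambda>(a,f). a * f"])
      show "\<forall>a\<in>U. (\<lambda>(a, f). a * f) (\<phi> a) = a"
        using ex unfolding \<phi>_def by (auto simp: mult.assoc e0l)
      show "\<forall>a'\<in>carrier G \<times> E. \<phi> ((\<lambda>(a, f). a * f) a') = a'"
      proof
        fix p assume "p \<in> carrier G \<times> E"
        then obtain a f where p: "p = (a,f)" "a * e0 = a" "f * f = f"
          unfolding G_def E_def by auto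
        have "a * f * f = a * f" using p by (simp add: mult.assoc)
        then have "(THE u. a * f * u = a * f) = f" using the_unit[OF lc] by blast
        moreover have "f * e0 = e0" using idem_left[OF lc p(3)] .
        ultimately show "\<phi> ((\<lambda>(a, f). a * f) p) = p" unfolding \<phi>_def using p
          by (simp add: mult.assoc)
      qed
      show "\<phi> ` U \<subseteq> carrier G \<times> E"
        using ex SS e0U unfolding \<phi>_def G_def subsemigroup_def by (auto simp: mult.assoc e0)
      show "(\<lambda>(a, f). a * f) ` (carrier G \<times> E) \<subseteq> U"
        using SS reg_idem unfolding G_def E_def subsemigroup_def U_def by auto
    qed
    have hom: "\<forall>x\<in>U. \<forall>y\<in>U. \<phi> (x * y) = (fst (\<phi> x) \<otimes>\<^bsub>G\<^esub> fst (\<phi> y), snd (\<phi> y))"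
    proof (intro ballI)
      fix x y assume "x \<in> U" "y \<in> U"
      then have "y * (THE u. y * u = y) = y" using ex by blast
      then have "x * y * (THE u. y * u = y) = x * y" by (simp add: mult.assoc)
      then have "(THE u. x * y * u = x * y) = (THE u. y * u = y)" using the_unit[OF lc] by blast
      then show "\<phi> (x * y) = (fst (\<phi> x) \<otimes>\<^bsub>G\<^esub> fst (\<phi> y), snd (\<phi> y))"
        unfolding \<phi>_def G_def by (simp add: mult.assoc e0l)
    qed
    have "right_zero_semigroup E (\<lambda>e f. f)" unfolding right_zero_semigroup_def by simp
    then show "subsemigroup U \<and> right_group U"
      unfolding right_group_def using SS grp bij hom by blast
  qed
  have P4: "\<forall>x. (\<exists>y\<in>R_class x. y \<noteq> x) \<longrightarrow> R_class x = (\<lambda>u. x * u) ` U"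
  proof (intro allI impI)
    fix x :: 'a assume "\<exists>y\<in>R_class x. y \<noteq> x"
    then obtain y where "y \<in> R_class x" "y \<noteq> x" by blast
    then have eq: "right_ideal1 y = right_ideal1 x" unfolding R_class_def by simp
    have yx: "y \<in> right_ideal1 x" using eq unfolding right_ideal1_def by auto
    have xy: "x \<in> right_ideal1 y" using eq unfolding right_ideal1_def by auto
    obtain t where t: "y = x * t" using yx \<open>y \<noteq> x\<close> unfolding right_ideal1_def by auto
    obtain s where s: "x = y * s" using xy \<open>y \<noteq> x\<close> unfolding right_ideal1_def by auto
    have "x * (t * s) = (x * t) * s" by (simp add: mult.assoc)
    also have "\<dots> = x" using s[symmetric] t[symmetric] by simp
    finally have xts: "x * (t * s) = x" .
    have "x * ((t*s)*(t*s)) = (x * (t*s)) * (t*s)" by (simp add: mult.assoc)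
    also have "\<dots> = x * (t * s)" using xts by simp
    finally have "x * ((t*s)*(t*s)) = x * (t * s)" .
    then have "(t*s)*(t*s) = t*s" using lcD[OF lc] by blast
    then have "t * s \<in> U" using reg_idem U_def by simp
    then show "R_class x = (\<lambda>u. x * u) ` U" by (rule R_eq[OF lc U_def xts])
  qed
  have P5: "U \<noteq> {} \<longrightarrow> (\<forall>x. \<exists>y. (\<lambda>u. x * u) ` U = R_class y)"
  proof (intro impI allI)
    fix x :: 'a assume "U \<noteq> {}"
    then obtain u0 :: 'a where "regular_el u0" using U_def by blast
    then obtain z0 where "(z0*u0)*(z0*u0) = z0*u0" using reg_E[OF lc] by blast
    define e0 where "e0 = z0 * u0"
    have e0: "e0 * e0 = e0" using \<open>(z0*u0)*(z0*u0) = z0*u0\<close> e0_def by simp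
    have e0l: "\<And>s. e0 * s = s" using idem_left[OF lc e0] .
    have e0U: "e0 \<in> U" using reg_idem[OF e0] U_def by simp
    have "x * e0 * e0 = x * e0" by (simp add: mult.assoc e0)
    then have R: "R_class (x * e0) = (\<lambda>u. x * e0 * u) ` U" by (rule R_eq[OF lc U_def _ e0U])
    have "(\<lambda>u. x * u) ` U = (\<lambda>u. x * e0 * u) ` U"
    proof
      show "(\<lambda>u. x * u) ` U \<subseteq> (\<lambda>u. x * e0 * u) ` U" by (auto simp: mult.assoc e0l)
      show "(\<lambda>u. x * e0 * u) ` U \<subseteq> (\<lambda>u. x * u) ` U"
        using SS e0U unfolding subsemigroup_def by (auto simp: mult.assoc)
    qed
    then show "\<exists>y. (\<lambda>u. x * u) ` U = R_class y" using R by (intro exI[of _ "x*e0"]) simp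
  qed
  show ?thesis by (intro conjI P1 P2 P3 P4 P5)
qed

end
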